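(* Let $G$ be a finite, simple, connected $(q+1)$-regular graph with $n$ vertices and $m$ edges, let $a\in[0,1]$ and $b\in\mathbb R$, and set $\eta=(1-q)a+b(q+1)$ and $\sigma=b((1-q)a+bq)$. Then the $(a,b)$-zeta function of $G$ satisfies \begin{align*} \mathbf Z_{a,b}(G,u)^{-1}&=(1-b^2u^2)^{m-n}\det\big((1+\sigma u^2)\mathbf I_n-\eta u\mathbf P(G)\big)\\ &=(1-b^2u^2)^{m-n}\det\Big((1-\eta u+\sigma u^2)\mathbf I_n+\frac{\eta u}{q+1}\Delta\Big), \end{align*} where $\Delta=\mathbf D-\mathbf A(G)$ is the Laplacian of $G$.
   Context: $D(G)$ is the set of $2m$ arcs of $G$ (for each edge $uv$, both $(u,v)$ and $(v,u)$); for $e=(u,v)$, $o(e)=u$, $t(e)=v$, $e^{-1}=(v,u)$, and $d_v=\deg v$. The generalized Grover matrix $\tilde{\mathbf U}=(\tilde U_{ef})_{e,f\in D(G)}$ has $\tilde U_{ef}=(2/d_{t(f)}-1)a+b$ if $t(f)=o(e)$ and $f\ne e^{-1}$; $\tilde U_{ef}=(2/d_{t(f)}-1)a$ if $f=e^{-1}$; $0$ otherwise. The $(a,b)$-zeta function is defined by $\mathbf Z_{a,b}(G,u)^{-1}=\det(\mathbf I_{2m}-u\tilde{\mathbf U})$. $\mathbf P(G)$ has entries $P_{uv}=1/\deg u$ if $u,v$ adjacent and $0$ otherwise; $\mathbf D$ is the diagonal degree matrix and $\mathbf A(G)$ the adjacency matrix. *)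

theory Defs
  imports "HOL-Analysis.Analysis"
begin

text \<open>A finite simple graph on the finite vertex type 'v is given by a symmetric,
irreflexive adjacency relation E.\<close>

definition deg :: "('v \<Rightarrow> 'v \<Rightarrow> bool) \<Rightarrow> 'v \<Rightarrow> nat" where
  "deg E v = card {w. E v w}"

definition arcs :: "('v \<Rightarrow> 'v \<Rightarrow> bool) \<Rightarrow> ('v \<times> 'v) set" where
  "arcs E = {(x, y). E x y}"

definition num_edges :: "('v::finite \<Rightarrow> 'v \<Rightarrow> bool) \<Rightarrow> nat" where
  "num_edges E = card (arcs E) div 2"

text \<open>Generalized Grover matrix; for an arc e, o(e) = fst e, t(e) = snd e,
e^{-1} = prod.swap e.\<close>
definition grover :: "real \<Rightarrow> real \<Rightarrow> ('v \<Rightarrow> 'v \<Rightarrow> bool) \<Rightarrow> ('v \<times> 'v) \<Rightarrow> ('v \<times> 'v) \<Rightarrow> real" where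
  "grover a b E e f =
     (if f = prod.swap e then (2 / real (deg E (snd f)) - 1) * a
      else if snd f = fst e then (2 / real (deg E (snd f)) - 1) * a + b
      else 0)"

definition det_on :: "'i set \<Rightarrow> ('i \<Rightarrow> 'i \<Rightarrow> real) \<Rightarrow> real" where
  "det_on S M = (\<Sum>p\<in>{p. p permutes S}. of_int (sign p) * (\<Prod>i\<in>S. M i (p i)))"

definition zeta_inv :: "real \<Rightarrow> real \<Rightarrow> ('v \<Rightarrow> 'v \<Rightarrow> bool) \<Rightarrow> real \<Rightarrow> real" where
  "zeta_inv a b E u =
     det_on (arcs E) (\<lambda>e f. (if e = f then 1 else 0) - u * grover a b E e f)"

definition adj_mat :: "('v::finite \<Rightarrow> 'v \<Rightarrow> bool) \<Rightarrow> real^'v^'v" where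
  "adj_mat E = (\<chi> i j. if E i j then 1 else 0)"

definition deg_mat :: "('v::finite \<Rightarrow> 'v \<Rightarrow> bool) \<Rightarrow> real^'v^'v" where
  "deg_mat E = (\<chi> i j. if i = j then real (deg E i) else 0)"

definition trans_mat :: "('v::finite \<Rightarrow> 'v \<Rightarrow> bool) \<Rightarrow> real^'v^'v" where
  "trans_mat E = (\<chi> i j. if E i j then 1 / real (deg E i) else 0)"

definition laplacian :: "('v::finite \<Rightarrow> 'v \<Rightarrow> bool) \<Rightarrow> real^'v^'v" where
  "laplacian E = deg_mat E - adj_mat E"

end

theory Submission
  imports Defs
begin


lemma det_on_UNIV: "det_on (UNIV::'i::finite set) M = det (\<chi> i j. M i j)"
  unfolding det_on_def det_def by simp

lemma det_on_ext:
  fixes S :: "'i::finite set"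
  shows "det_on S M = det_on UNIV (\<lambda>i j. if i \<in> S \<and> j \<in> S then M i j else if i = j then 1 else 0)"
  (is "_ = det_on UNIV ?N")
proof -
  have sub: "{p. p permutes S} \<subseteq> {p. p permutes (UNIV::'i set)}"
    using permutes_subset by blast
  show ?thesis unfolding det_on_def
  proof (rule sum.mono_neutral_cong_left[OF _ sub])
    show "finite {p. p permutes (UNIV::'i set)}" by simp
    show "\<forall>p\<in>{p. p permutes UNIV} - {p. p permutes S}. of_int (sign p) * (\<Prod>i\<in>UNIV. ?N i (p i)) = 0"
    proof
      fix p assume p: "p \<in> {p. p permutes (UNIV::'i set)} - {p. p permutes S}"
      then have "\<exists>i. i \<notin> S \<and> p i \<noteq> i"
        by (auto simp: permutes_def)
      then obtain i where i: "i \<notin> S" "p i \<noteq> i" by blast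
      have "?N i (p i) = 0" using i by auto
      then have "\<exists>a\<in>UNIV. ?N a (p a) = 0" by blast
      then have "(\<Prod>i\<in>UNIV. ?N i (p i)) = 0"
        by (rule prod_zero[OF finite])
      then show "of_int (sign p) * (\<Prod>i\<in>UNIV. ?N i (p i)) = 0" by simp
    qed
    show "of_int (sign p) * (\<Prod>i\<in>S. M i (p i)) = of_int (sign p) * (\<Prod>i\<in>UNIV. ?N i (p i))"
      if "p \<in> {p. p permutes S}" for p
    proof -
      have p: "p permutes S" using that by simp
      have "(\<Prod>i\<in>UNIV. ?N i (p i)) = (\<Prod>i\<in>S. ?N i (p i))"
        by (rule prod.mono_neutral_right) (auto simp: permutes_not_in[OF p])
      also have "\<dots> = (\<Prod>i\<in>S. M i (p i))"
        by (rule prod.cong) (auto simp: permutes_in_image[OF p])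
      finally show ?thesis by simp
    qed
  qed
qed

lemma det_on_reindex:
  assumes f: "inj_on f A" and A: "finite A"
  shows "det_on (f ` A) M = det_on A (\<lambda>i j. M (f i) (f j))"
proof -
  have bij: "bij_betw f A (f ` A)" using f by (simp add: bij_betw_imageI)
  have "det_on A (\<lambda>i j. M (f i) (f j)) =
        (\<Sum>p\<in>{p. p permutes A}. of_int (sign (map_permutation A f p)) * (\<Prod>i\<in>f ` A. M i (map_permutation A f p i)))"
    unfolding det_on_def
  proof (rule sum.cong[OF refl])
    fix p assume "p \<in> {p. p permutes A}"
    then have p: "p permutes A" by simp
    have "(\<Prod>i\<in>f ` A. M i (map_permutation A f p i)) = (\<Prod>i\<in>A. M (f i) (map_permutation A f p (f i)))"
      by (rule prod.reindex[OF f, unfolded o_def])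
    also have "\<dots> = (\<Prod>i\<in>A. M (f i) (f (p i)))"
      by (rule prod.cong) (auto simp: map_permutation_apply[OF f])
    finally show "of_int (sign p) * (\<Prod>i\<in>A. M (f i) (f (p i))) =
      of_int (sign (map_permutation A f p)) * (\<Prod>i\<in>f ` A. M i (map_permutation A f p i))"
      using sign_map_permutation[OF f p A] by simp
  qed
  also have "\<dots> = det_on (f ` A) M"
    unfolding det_on_def
  proof (rule sum.reindex_bij_witness[where j = "map_permutation A f" and i = "map_permutation (f ` A) (inv_into A f)"])
    fix p assume "p \<in> {p. p permutes f ` A}"
    then have p: "p permutes f ` A" by simp
    have bij2: "bij_betw (inv_into A f) (f ` A) A" by (rule bij_betw_inv_into[OF bij])
    show "map_permutation (f ` A) (inv_into A f) p \<in> {p. p permutes A}"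
      using map_permutation_permutes[OF bij2 p] by simp
    show "map_permutation A f (map_permutation (f ` A) (inv_into A f) p) = p"
      by (rule map_permutation_compose_inv[OF bij2 p]) (simp add: f_inv_into_f)
  next
    fix p assume "p \<in> {p. p permutes A}"
    then have p: "p permutes A" by simp
    show "map_permutation (f ` A) (inv_into A f) (map_permutation A f p) = p"
      by (rule map_permutation_compose_inv[OF bij p]) (simp add: inv_into_f_f[OF f])
    show "map_permutation A f p \<in> {p. p permutes f ` A}"
      using map_permutation_permutes[OF bij p] by simp
  qed simp
  finally show ?thesis ..
qed


lemma mm_add_rdistrib: "((A::real^'n^'m) + B) ** (C::real^'p^'n) = A ** C + B ** C"
  by (vector matrix_matrix_mult_def sum.distrib[symmetric] field_simps)

lemma mm_diff_ldistrib: "(A::real^'n^'m) ** ((B::real^'p^'n) - C) = A ** B - A ** C"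
  by (vector matrix_matrix_mult_def sum_subtractf[symmetric] field_simps)

lemma mm_diff_rdistrib: "((A::real^'n^'m) - B) ** (C::real^'p^'n) = A ** C - B ** C"
  by (vector matrix_matrix_mult_def sum_subtractf[symmetric] field_simps)

lemma mm_scaleR_left: "(c *\<^sub>R (A::real^'n^'m)) ** (B::real^'p^'n) = c *\<^sub>R (A ** B)"
  by (vector matrix_matrix_mult_def sum_distrib_left field_simps)

lemma mm_scaleR_right: "(A::real^'n^'m) ** (c *\<^sub>R (B::real^'p^'n)) = c *\<^sub>R (A ** B)"
  by (vector matrix_matrix_mult_def sum_distrib_left field_simps)

lemmas mm_simps = matrix_add_ldistrib mm_add_rdistrib mm_diff_ldistrib mm_diff_rdistrib
  mm_scaleR_left mm_scaleR_right

lemma det_scaleR: "det (c *\<^sub>R (A::real^'n^'n)) = c ^ CARD('n) * det A"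
proof -
  have "c *\<^sub>R A = mat c ** A"
    unfolding matrix_matrix_mult_def mat_def
    by (simp add: vec_eq_iff if_distrib if_distribR sum.delta' cong: if_cong)
  moreover have "det (mat c :: real^'n^'n) = c ^ CARD('n)"
    by (simp add: det_diagonal mat_def)
  ultimately show ?thesis by (simp add: det_mul)
qed

lemma det_unipotent:
  fixes N :: "real^'n^'n"
  assumes N: "\<And>i j. N$i$j \<noteq> 0 \<Longrightarrow> i \<in> H \<and> j \<notin> H"
  shows "det (mat 1 + N) = 1"
proof -
  let ?M = "mat 1 + N"
  have "det ?M = (\<Sum>p\<in>{id}. of_int (sign p) * (\<Prod>i\<in>UNIV. ?M$i$p i))"
    unfolding det_def
  proof (rule sum.mono_neutral_right)
    show "finite {p. p permutes (UNIV::'n set)}" by simp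
    show "{id} \<subseteq> {p. p permutes (UNIV::'n set)}" by (simp add: permutes_id)
    show "\<forall>p\<in>{p. p permutes UNIV} - {id}. of_int (sign p) * (\<Prod>i\<in>UNIV. ?M$i$p i) = 0"
    proof
      fix p assume p: "p \<in> {p. p permutes (UNIV::'n set)} - {id}"
      then have pp: "p permutes (UNIV::'n set)" and "p \<noteq> id" by auto
      then obtain i where i: "p i \<noteq> i" by (auto simp: fun_eq_iff)
      have inj: "inj p" using pp permutes_inj by blast
      have "\<exists>a\<in>UNIV. ?M$a$p a = 0"
      proof (rule ccontr)
        assume "\<not> ?thesis"
        then have nz: "\<And>a. ?M$a$p a \<noteq> 0" by blast
        have "N$i$p i \<noteq> 0" using nz[of i] i by (simp add: mat_def)
        then have h1: "p i \<notin> H" using N by blast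
        have "p (p i) \<noteq> p i" using i inj by (metis injD)
        then have "N$(p i)$p (p i) \<noteq> 0" using nz[of "p i"] by (simp add: mat_def)
        then have "p i \<in> H" using N by blast
        with h1 show False by simp
      qed
      then have "(\<Prod>i\<in>UNIV. ?M$i$p i) = 0" by (rule prod_zero[OF finite])
      then show "of_int (sign p) * (\<Prod>i\<in>UNIV. ?M$i$p i) = 0" by simp
    qed
  qed
  also have "\<dots> = (\<Prod>i\<in>UNIV. ?M$i$i)" by simp
  also have "\<dots> = 1"
  proof (rule prod.neutral, rule ballI)
    fix i :: 'n
    have "N$i$i = 0" using N[of i i] by blast
    then show "?M$i$i = 1" by (simp add: mat_def)
  qed
  finally show ?thesis .
qed

lemma det_inv_nonzero:
  fixes X :: "real^'n^'n"
  assumes "X ** X = 0"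
  shows "det (mat 1 + X) \<noteq> 0"
proof -
  have "(mat 1 + X) ** (mat 1 - X) = mat 1"
    using assms by (simp add: mm_simps)
  then have "det (mat 1 + X) * det (mat 1 - X) = 1"
    by (metis det_I det_mul)
  then show ?thesis by auto
qed

lemma sylvester_nil:
  fixes X Y :: "real^'n^'n"
  assumes X: "X ** X = 0" and Y: "Y ** Y = 0"
  shows "det (mat 1 - X ** Y) = det (mat 1 - Y ** X)"
proof -
  have e1: "(mat 1 + X) ** ((mat 1 - X ** Y) ** (mat 1 + Y)) = mat 1 + X + Y"
    using X Y by (simp add: mm_simps matrix_mul_assoc[symmetric] algebra_simps)
       (simp add: matrix_mul_assoc)
  have e2: "(mat 1 + Y) ** ((mat 1 - Y ** X) ** (mat 1 + X)) = mat 1 + X + Y"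
    using X Y by (simp add: mm_simps matrix_mul_assoc[symmetric] algebra_simps)
       (simp add: matrix_mul_assoc)
  have "det (mat 1 + X) * (det (mat 1 - X ** Y) * det (mat 1 + Y)) =
        det (mat 1 + Y) * (det (mat 1 - Y ** X) * det (mat 1 + X))"
    using e1 e2 by (metis det_mul)
  then show ?thesis using det_inv_nonzero[OF X] det_inv_nonzero[OF Y]
    by (metis (no_types, lifting) mult.commute mult.left_commute mult_cancel_left)
qed



lemma in_arcs: "e \<in> arcs E \<longleftrightarrow> E (fst e) (snd e)"
  by (cases e) (simp add: arcs_def)

definition Tm :: "('v::finite \<Rightarrow> 'v \<Rightarrow> bool) \<Rightarrow> real^('v\<times>'v)^('v\<times>'v)" where
  "Tm E = (\<chi> e d. if E (fst e) (snd e) \<and> d = (fst e, fst e) then 1 else 0)"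
definition Ttm :: "('v::finite \<Rightarrow> 'v \<Rightarrow> bool) \<Rightarrow> real^('v\<times>'v)^('v\<times>'v)" where
  "Ttm E = (\<chi> d f. if E (fst f) (snd f) \<and> d = (snd f, snd f) then 1 else 0)"
definition Jm :: "('v::finite \<Rightarrow> 'v \<Rightarrow> bool) \<Rightarrow> real^('v\<times>'v)^('v\<times>'v)" where
  "Jm E = (\<chi> e f. if E (fst e) (snd e) \<and> f = prod.swap e then 1 else 0)"
definition Bm :: "('v::finite \<Rightarrow> 'v \<Rightarrow> bool) \<Rightarrow> real^('v\<times>'v)^('v\<times>'v)" where
  "Bm E = (\<chi> e f. if E (fst e) (snd e) \<and> E (fst f) (snd f) \<and> snd f = fst e then 1 else 0)"
definition Pm :: "('v::finite \<Rightarrow> 'v \<Rightarrow> bool) \<Rightarrow> real^('v\<times>'v)^('v\<times>'v)" where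
  "Pm E = (\<chi> e f. if e = f \<and> E (fst e) (snd e) then 1 else 0)"
definition Av :: "('v::finite \<Rightarrow> 'v \<Rightarrow> bool) \<Rightarrow> real^('v\<times>'v)^('v\<times>'v)" where
  "Av E = (\<chi> d d'. if fst d = snd d \<and> fst d' = snd d' \<and> E (fst d') (fst d) then 1 else 0)"
definition Pd :: "real^('v::finite\<times>'v)^('v\<times>'v)" where
  "Pd = (\<chi> d d'. if d = d' \<and> fst d = snd d then 1 else 0)"

definition TTm :: "('v::finite \<Rightarrow> 'v \<Rightarrow> bool) \<Rightarrow> real^('v\<times>'v)^('v\<times>'v)" where
  "TTm E = (\<chi> e d. if E (fst e) (snd e) \<and> d = (snd e, snd e) then 1 else 0)"

definition Gm :: "('v::finite \<Rightarrow> 'v \<Rightarrow> bool) \<Rightarrow> real \<Rightarrow> real \<Rightarrow> real^('v\<times>'v)^('v\<times>'v)" where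
  "Gm E a b = (\<chi> e f. if E (fst e) (snd e) \<and> E (fst f) (snd f) then grover a b E e f else 0)"

lemma mult_ind: "(if P then 1 else 0) * (if Q then 1 else 0) = (if P \<and> Q then 1 else (0::real))"
  by simp

lemma sum_ind: "(\<Sum>k\<in>(UNIV::'a::finite set). if P k then 1 else 0) = real (card {k. P k})"
  by (simp add: sum.If_cases)

lemma sum_ind_cond: "(\<Sum>k\<in>(UNIV::'a::finite set). if C \<and> P k then 1 else 0) = (if C then real (card {k. P k}) else 0)"
  by (cases C) (simp_all add: sum_ind)

lemma sum_single:
  fixes g :: "'a::finite \<Rightarrow> real"
  shows "(\<Sum>k\<in>UNIV. if k = a \<and> P k then g k else 0) = (if P a then g a else 0)"
  by (simp add: sum.delta' cong: conj_cong)

context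
  fixes E :: "'v::finite \<Rightarrow> 'v \<Rightarrow> bool"
  assumes sym: "\<And>x y. E x y \<Longrightarrow> E y x"
    and irrefl: "\<And>x. \<not> E x x"
begin

lemma F1: "Tm E ** Ttm E = Bm E"
proof -
  have "(Tm E ** Ttm E)$e$f = Bm E$e$f" for e f
  proof -
    have "(Tm E ** Ttm E)$e$f = (\<Sum>d\<in>UNIV. if d = (fst e, fst e) \<and> (E (fst e) (snd e) \<and> E (fst f) (snd f) \<and> d = (snd f, snd f)) then 1 else 0)"
      unfolding matrix_matrix_mult_def Tm_def Ttm_def by (auto intro!: sum.cong)
    also have "\<dots> = Bm E$e$f" by (subst sum_single) (auto simp: Bm_def)
    finally show ?thesis .
  qed
  then show ?thesis by (simp add: vec_eq_iff)
qed


lemma F2: "Jm E ** Jm E = Pm E"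
proof -
  have "(Jm E ** Jm E)$e$f = Pm E$e$f" for e f
  proof -
    have "(Jm E ** Jm E)$e$f = (\<Sum>k\<in>UNIV. if k = prod.swap e \<and> (E (fst e) (snd e) \<and> E (fst k) (snd k) \<and> f = prod.swap k) then 1 else 0)"
      unfolding matrix_matrix_mult_def Jm_def by (auto intro!: sum.cong)
    also have "\<dots> = Pm E$e$f" by (subst sum_single) (auto simp: Pm_def sym)
    finally show ?thesis .
  qed
  then show ?thesis by (simp add: vec_eq_iff)
qed

lemma F3a: "Tm E ** Tm E = 0"
proof -
  have "(Tm E ** Tm E)$e$f = 0" for e f
  proof -
    have "(Tm E ** Tm E)$e$f = (\<Sum>k\<in>UNIV. if k = (fst e, fst e) \<and> (E (fst e) (snd e) \<and> E (fst k) (snd k) \<and> f = (fst k, fst k)) then 1 else 0)"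
      unfolding matrix_matrix_mult_def Tm_def by (auto intro!: sum.cong)
    also have "\<dots> = 0" by (subst sum_single) (auto simp: irrefl)
    finally show ?thesis .
  qed
  then show ?thesis by (simp add: vec_eq_iff)
qed

lemma F3b: "Ttm E ** Ttm E = 0"
proof -
  have "(Ttm E ** Ttm E)$e$f = 0" for e f
  proof -
    have "(Ttm E ** Ttm E)$e$f = (\<Sum>k\<in>UNIV. if k = (snd f, snd f) \<and> (E (fst f) (snd f) \<and> E (fst k) (snd k) \<and> e = (snd k, snd k)) then 1 else 0)"
      unfolding matrix_matrix_mult_def Ttm_def by (auto intro!: sum.cong)
    also have "\<dots> = 0" by (subst sum_single) (auto simp: irrefl)
    finally show ?thesis .
  qed
  then show ?thesis by (simp add: vec_eq_iff)
qed

lemma F3c: "Jm E ** Ttm E = 0"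
proof -
  have "(Jm E ** Ttm E)$e$f = 0" for e f
  proof -
    have "(Jm E ** Ttm E)$e$f = (\<Sum>k\<in>UNIV. if k = prod.swap e \<and> (E (fst e) (snd e) \<and> E (fst f) (snd f) \<and> k = (snd f, snd f)) then 1 else 0)"
      unfolding matrix_matrix_mult_def Jm_def Ttm_def by (auto intro!: sum.cong)
    also have "\<dots> = 0" by (subst sum_single) (cases e, auto simp: irrefl)
    finally show ?thesis .
  qed
  then show ?thesis by (simp add: vec_eq_iff)
qed

lemma F3d: "Pm E ** Tm E = Tm E"
proof -
  have "(Pm E ** Tm E)$e$f = Tm E$e$f" for e f
  proof -
    have "(Pm E ** Tm E)$e$f = (\<Sum>k\<in>UNIV. if k = e \<and> (E (fst e) (snd e) \<and> f = (fst e, fst e)) then 1 else 0)"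
      unfolding matrix_matrix_mult_def Pm_def Tm_def by (auto intro!: sum.cong)
    also have "\<dots> = Tm E$e$f" by (subst sum_single) (auto simp: Tm_def)
    finally show ?thesis .
  qed
  then show ?thesis by (simp add: vec_eq_iff)
qed

lemma F4: "Ttm E ** Tm E = Av E"
proof -
  have "(Ttm E ** Tm E)$d$d' = Av E$d$d'" for d d'
  proof -
    have "(Ttm E ** Tm E)$d$d' = (\<Sum>k\<in>UNIV. (if E (fst k) (snd k) \<and> d = (snd k, snd k) then 1 else 0) * (if E (fst k) (snd k) \<and> d' = (fst k, fst k) then 1 else 0))"
      by (simp add: matrix_matrix_mult_def Ttm_def Tm_def)
    also have "\<dots> = (\<Sum>k\<in>UNIV. if k = (fst d', fst d) \<and> (E (fst d') (fst d) \<and> fst d = snd d \<and> fst d' = snd d') then 1 else 0)"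
    proof (rule sum.cong[OF refl])
      fix k :: "'v \<times> 'v"
      have "((E (fst k) (snd k) \<and> d = (snd k, snd k)) \<and> (E (fst k) (snd k) \<and> d' = (fst k, fst k))) \<longleftrightarrow>
            (k = (fst d', fst d) \<and> (E (fst d') (fst d) \<and> fst d = snd d \<and> fst d' = snd d'))"
        by (cases k; cases d; cases d') auto
      then show "(if E (fst k) (snd k) \<and> d = (snd k, snd k) then 1 else 0) * (if E (fst k) (snd k) \<and> d' = (fst k, fst k) then 1 else 0) =
        (if k = (fst d', fst d) \<and> (E (fst d') (fst d) \<and> fst d = snd d \<and> fst d' = snd d') then 1 else (0::real))"
        unfolding mult_ind by (rule if_cong) auto
    qed
    also have "\<dots> = Av E$d$d'" by (subst sum_single) (auto simp: Av_def)
    finally show ?thesis .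
  qed
  then show ?thesis by (simp add: vec_eq_iff)
qed


lemma F5a: "Jm E ** Tm E = TTm E"
proof -
  have "(Jm E ** Tm E)$e$f = TTm E$e$f" for e f
  proof -
    have "(Jm E ** Tm E)$e$f = (\<Sum>k\<in>UNIV. if k = prod.swap e \<and> (E (fst e) (snd e) \<and> E (fst k) (snd k) \<and> f = (fst k, fst k)) then 1 else 0)"
      unfolding matrix_matrix_mult_def Jm_def Tm_def by (auto intro!: sum.cong)
    also have "\<dots> = TTm E$e$f" by (subst sum_single) (auto simp: TTm_def sym)
    finally show ?thesis .
  qed
  then show ?thesis by (simp add: vec_eq_iff)
qed

lemma card_in: "card {f. E (fst f) (snd f) \<and> snd f = v} = deg E v"
proof -
  have "{f. E (fst f) (snd f) \<and> snd f = v} = (\<lambda>w. (w, v)) ` {w. E v w}"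
    using sym by auto
  moreover have "inj (\<lambda>w::'v. (w, v))" by (auto intro: injI)
  ultimately show ?thesis unfolding deg_def
    by (metis (no_types, lifting) card_image inj_on_subset subset_UNIV)
qed

lemma F5b: "Ttm E ** TTm E = (\<chi> d d'. if d = d' \<and> fst d = snd d then real (deg E (fst d)) else 0)"
proof -
  have "(Ttm E ** TTm E)$d$d' = (if d = d' \<and> fst d = snd d then real (deg E (fst d)) else 0)" for d d'
  proof -
    have "(Ttm E ** TTm E)$d$d' = (\<Sum>k\<in>UNIV. (if E (fst k) (snd k) \<and> d = (snd k, snd k) then 1 else 0) * (if E (fst k) (snd k) \<and> d' = (snd k, snd k) then 1 else 0))"
      by (simp add: matrix_matrix_mult_def Ttm_def TTm_def)
    also have "\<dots> = (\<Sum>k\<in>UNIV. if (d = d' \<and> fst d = snd d) \<and> (E (fst k) (snd k) \<and> snd k = fst d) then 1 else 0)"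
    proof (rule sum.cong[OF refl])
      fix k :: "'v \<times> 'v"
      have "((E (fst k) (snd k) \<and> d = (snd k, snd k)) \<and> (E (fst k) (snd k) \<and> d' = (snd k, snd k))) \<longleftrightarrow>
            ((d = d' \<and> fst d = snd d) \<and> (E (fst k) (snd k) \<and> snd k = fst d))"
        by (cases k; cases d; cases d') auto
      then show "(if E (fst k) (snd k) \<and> d = (snd k, snd k) then 1 else 0) * (if E (fst k) (snd k) \<and> d' = (snd k, snd k) then 1 else 0) =
        (if (d = d' \<and> fst d = snd d) \<and> (E (fst k) (snd k) \<and> snd k = fst d) then 1 else (0::real))"
        unfolding mult_ind by (rule if_cong) auto
    qed
    also have "\<dots> = (if d = d' \<and> fst d = snd d then real (card {k. E (fst k) (snd k) \<and> snd k = fst d}) else 0)"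
      by (rule sum_ind_cond)
    also have "\<dots> = (if d = d' \<and> fst d = snd d then real (deg E (fst d)) else 0)"
      by (simp only: card_in)
    finally show ?thesis .
  qed
  then show ?thesis by (simp add: vec_eq_iff)
qed


lemma zeta_det: "zeta_inv a b E u = det ((mat 1 :: real^('v\<times>'v)^('v\<times>'v)) - u *\<^sub>R Gm E a b)"
proof -
  have "zeta_inv a b E u = det_on UNIV (\<lambda>i j. if i \<in> arcs E \<and> j \<in> arcs E then (if i = j then 1 else 0) - u * grover a b E i j else if i = j then 1 else 0)"
    unfolding zeta_inv_def by (rule det_on_ext)
  also have "\<dots> = det ((mat 1 :: real^('v\<times>'v)^('v\<times>'v)) - u *\<^sub>R Gm E a b)"
    unfolding det_on_UNIV by (rule arg_cong[where f = det]) (auto simp: vec_eq_iff mat_def Gm_def in_arcs)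
  finally show ?thesis .
qed

lemma G_eq:
  assumes regular: "\<And>v. deg E v = q + 1"
  shows "Gm E a b = ((2 / (real q + 1) - 1) * a + b) *\<^sub>R Bm E - b *\<^sub>R Jm E"
proof -
  have "Gm E a b $ e $ f = (((2 / (real q + 1) - 1) * a + b) *\<^sub>R Bm E - b *\<^sub>R Jm E) $ e $ f" for e f
    by (cases e; cases f) (auto simp: Gm_def grover_def Bm_def Jm_def regular sym)
  then show ?thesis by (simp add: vec_eq_iff)
qed

lemma main_alg:
  fixes s cc r :: real
  defines "r \<equiv> 1 - s^2"
  assumes r: "r \<noteq> 0"
  defines "W \<equiv> (mat 1 :: real^('v\<times>'v)^('v\<times>'v)) - s *\<^sub>R Jm E"
  defines "X \<equiv> (cc / r) *\<^sub>R Tm E"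
  defines "Y \<equiv> Ttm E ** W"
  shows "(mat 1 + s *\<^sub>R Jm E - cc *\<^sub>R Bm E) ** W = (mat 1 - s^2 *\<^sub>R Pm E) ** (mat 1 - X ** Y)"
    and "X ** X = 0" and "Y ** Y = 0"
    and "Y ** X = (cc / r) *\<^sub>R (Av E - s *\<^sub>R (Ttm E ** TTm E))"
proof -
  have JJ: "Jm E ** Jm E = Pm E" by (rule F2)
  have "(mat 1 + s *\<^sub>R Jm E - cc *\<^sub>R Bm E) ** W = mat 1 - s^2 *\<^sub>R Pm E - cc *\<^sub>R (Bm E ** W)"
    unfolding W_def by (simp add: mm_simps JJ power2_eq_square algebra_simps)
  moreover have "(mat 1 - s^2 *\<^sub>R Pm E) ** Tm E = r *\<^sub>R Tm E"
    by (simp add: mm_simps F3d r_def algebra_simps)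
  then have "(mat 1 - s^2 *\<^sub>R Pm E) ** (mat 1 - X ** Y) = mat 1 - s^2 *\<^sub>R Pm E - cc *\<^sub>R (Bm E ** W)"
    using r unfolding X_def Y_def
    by (simp add: mm_simps matrix_mul_assoc F1[symmetric])
  ultimately show "(mat 1 + s *\<^sub>R Jm E - cc *\<^sub>R Bm E) ** W = (mat 1 - s^2 *\<^sub>R Pm E) ** (mat 1 - X ** Y)"
    by simp
  show "X ** X = 0" unfolding X_def by (simp add: mm_simps F3a)
  have WT: "W ** Ttm E = Ttm E" unfolding W_def by (simp add: mm_simps F3c)
  show "Y ** Y = 0" unfolding Y_def
    by (metis WT F3b matrix_mul_assoc times0_left)
  show "Y ** X = (cc / r) *\<^sub>R (Av E - s *\<^sub>R (Ttm E ** TTm E))"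
    unfolding Y_def X_def W_def
    by (simp add: mm_simps matrix_mul_assoc[symmetric] F5a F4)
qed

lemma card_arcs_even: "card (arcs E) = 2 * num_edges E"
  and det_W: "det ((mat 1 :: real^('v\<times>'v)^('v\<times>'v)) - s *\<^sub>R Jm E) = (1 - s^2) ^ num_edges E"
proof -
  obtain g :: "'v \<Rightarrow> nat" and n where g: "inj_on g UNIV"
    using finite_imp_inj_to_nat_seg[of "UNIV :: 'v set"] by auto
  define H where "H = {e. E (fst e) (snd e) \<and> g (fst e) < g (snd e)}"
  have gneq: "E x y \<Longrightarrow> g x \<noteq> g y" for x y
    using g irrefl by (metis injD)
  have arcsH: "arcs E = H \<union> prod.swap ` H"
  proof
    show "arcs E \<subseteq> H \<union> prod.swap ` H"
    proof
      fix e assume "e \<in> arcs E"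
      then have e: "E (fst e) (snd e)" by (simp add: in_arcs)
      show "e \<in> H \<union> prod.swap ` H"
      proof (cases "g (fst e) < g (snd e)")
        case True then show ?thesis using e by (auto simp: H_def)
      next
        case False
        then have "g (snd e) < g (fst e)" using gneq[OF e] by linarith
        then have "prod.swap e \<in> H" using sym[OF e] by (auto simp: H_def)
        then show ?thesis by (metis UnI2 image_eqI swap_swap)
      qed
    qed
    show "H \<union> prod.swap ` H \<subseteq> arcs E" using sym by (auto simp: H_def in_arcs)
  qed
  have disj: "H \<inter> prod.swap ` H = {}" by (auto simp: H_def)
  have cH: "card (prod.swap ` H) = card H"
    by (rule card_image) (auto intro: inj_onI)
  have cA: "card (arcs E) = 2 * card H"
    unfolding arcsH by (subst card_Un_disjoint) (auto simp: disj cH)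
  then have mH: "num_edges E = card H" unfolding num_edges_def by simp
  from cA mH show "card (arcs E) = 2 * num_edges E" by simp
  define K1 :: "real^('v\<times>'v)^('v\<times>'v)" where "K1 = (\<chi> e f. if e \<in> H \<and> f = prod.swap e then 1 else 0)"
  define K2 :: "real^('v\<times>'v)^('v\<times>'v)" where "K2 = (\<chi> e f. if E (fst e) (snd e) \<and> e \<notin> H \<and> f = prod.swap e then 1 else 0)"
  define PH :: "real^('v\<times>'v)^('v\<times>'v)" where "PH = (\<chi> e f. if e = f \<and> e \<in> H then 1 else 0)"
  have HE: "e \<in> H \<Longrightarrow> E (fst e) (snd e)" for e by (simp add: H_def)
  have swH: "e \<in> H \<Longrightarrow> prod.swap e \<notin> H" for e by (auto simp: H_def)
  have swH2: "E (fst e) (snd e) \<Longrightarrow> e \<notin> H \<Longrightarrow> prod.swap e \<in> H" for e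
    using arcsH by (auto simp: in_arcs) 
  have J: "Jm E = K1 + K2"
    by (auto simp: vec_eq_iff Jm_def K1_def K2_def H_def)
  have K1PH: "K1 ** PH = 0"
  proof -
    have "(K1 ** PH)$e$f = 0" for e f
    proof -
      have "(K1 ** PH)$e$f = (\<Sum>k\<in>UNIV. if k = prod.swap e \<and> (e \<in> H \<and> k = f \<and> k \<in> H) then 1 else 0)"
        unfolding matrix_matrix_mult_def K1_def PH_def by (auto intro!: sum.cong)
      also have "\<dots> = 0" by (subst sum_single) (auto dest: swH)
      finally show ?thesis .
    qed
    then show ?thesis by (simp add: vec_eq_iff)
  qed
  have PHK2: "PH ** K2 = 0"
  proof -
    have "(PH ** K2)$e$f = 0" for e f
    proof -
      have "(PH ** K2)$e$f = (\<Sum>k\<in>UNIV. if k = e \<and> (e \<in> H \<and> E (fst k) (snd k) \<and> k \<notin> H \<and> f = prod.swap k) then 1 else 0)"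
        unfolding matrix_matrix_mult_def K2_def PH_def by (auto intro!: sum.cong)
      also have "\<dots> = 0" by (subst sum_single) auto
      finally show ?thesis .
    qed
    then show ?thesis by (simp add: vec_eq_iff)
  qed
  have K1K2: "K1 ** K2 = PH"
  proof -
    have "(K1 ** K2)$e$f = PH$e$f" for e f
    proof -
      have "(K1 ** K2)$e$f = (\<Sum>k\<in>UNIV. if k = prod.swap e \<and> (e \<in> H \<and> E (fst k) (snd k) \<and> k \<notin> H \<and> f = prod.swap k) then 1 else 0)"
        unfolding matrix_matrix_mult_def K1_def K2_def by (auto intro!: sum.cong)
      also have "\<dots> = PH$e$f" by (subst sum_single) (cases e, auto simp: PH_def H_def dest: sym)
      finally show ?thesis .
    qed
    then show ?thesis by (simp add: vec_eq_iff)
  qed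
  define Z where "Z = mat 1 - s^2 *\<^sub>R PH"
  have fact: "mat 1 - s *\<^sub>R Jm E = (mat 1 - s *\<^sub>R K1) ** (Z ** (mat 1 - s *\<^sub>R K2))"
    unfolding J Z_def
    by (simp add: mm_simps matrix_mul_assoc K1PH K1K2 power2_eq_square algebra_simps)
       (simp add: matrix_mul_assoc[symmetric] PHK2)
  have d1: "det (mat 1 - s *\<^sub>R K1) = 1"
  proof -
    have "mat 1 - s *\<^sub>R K1 = mat 1 + (- s) *\<^sub>R K1" by simp
    also have "det \<dots> = 1"
      by (rule det_unipotent[where H = H]) (auto simp: K1_def dest: swH split: if_splits)
    finally show ?thesis .
  qed
  have d2: "det (mat 1 - s *\<^sub>R K2) = 1"
  proof -
    have "mat 1 - s *\<^sub>R K2 = mat 1 + (- s) *\<^sub>R K2" by simp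
    also have "det \<dots> = 1"
      by (rule det_unipotent[where H = "arcs E - H"]) (auto simp: K2_def in_arcs dest: swH2 split: if_splits)
    finally show ?thesis .
  qed
  have dZ: "det Z = (1 - s^2) ^ card H"
  proof -
    have "det Z = (\<Prod>i\<in>UNIV. if i \<in> H then 1 - s^2 else 1)"
      by (subst det_diagonal) (auto simp: Z_def PH_def mat_def intro!: prod.cong)
    also have "\<dots> = (1 - s^2) ^ card H"
      by (simp add: prod.If_cases)
    finally show ?thesis .
  qed
  show "det ((mat 1 :: real^('v\<times>'v)^('v\<times>'v)) - s *\<^sub>R Jm E) = (1 - s^2) ^ num_edges E"
    unfolding fact by (simp add: det_mul d1 d2 dZ mH)
qed

lemma det_Dr: "det ((mat 1 :: real^('v\<times>'v)^('v\<times>'v)) - s^2 *\<^sub>R Pm E) = (1 - s^2) ^ card (arcs E)"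
proof -
  have "det ((mat 1 :: real^('v\<times>'v)^('v\<times>'v)) - s^2 *\<^sub>R Pm E) = (\<Prod>i\<in>UNIV. if i \<in> arcs E then 1 - s^2 else 1)"
    by (subst det_diagonal) (auto simp: Pm_def mat_def in_arcs intro!: prod.cong)
  also have "\<dots> = (1 - s^2) ^ card (arcs E)"
    by (simp add: prod.If_cases)
  finally show ?thesis .
qed

lemma YX_block:
  fixes \<beta> r s :: real and q :: nat
  assumes regular: "\<And>v. deg E v = q + 1"
  defines "V \<equiv> ((\<chi> v w. (if v = w then 1 else 0) - (\<beta> / r) * ((if E v w then 1 else 0) - s * (real q + 1) * (if v = w then 1 else 0))) :: real^'v^'v)"
  shows "det ((mat 1 :: real^('v\<times>'v)^('v\<times>'v)) - (\<beta> / r) *\<^sub>R (Av E - s *\<^sub>R (Ttm E ** TTm E))) = det V"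
proof -
  let ?N = "(mat 1 :: real^('v\<times>'v)^('v\<times>'v)) - (\<beta> / r) *\<^sub>R (Av E - s *\<^sub>R (Ttm E ** TTm E))"
  define Dg where "Dg = {d :: 'v\<times>'v. fst d = snd d}"
  have N: "?N = (\<chi> d d'. if d \<in> Dg \<and> d' \<in> Dg then V$(fst d)$(fst d') else if d = d' then 1 else 0)"
    by (auto simp: vec_eq_iff F5b Av_def V_def Dg_def mat_def regular prod_eq_iff dest: sym)
  have "det ?N = det_on UNIV (\<lambda>d d'. if d \<in> Dg \<and> d' \<in> Dg then V$(fst d)$(fst d') else if d = d' then 1 else 0)"
    unfolding N det_on_UNIV ..
  also have "\<dots> = det_on Dg (\<lambda>d d'. V$(fst d)$(fst d'))"
    by (rule det_on_ext[symmetric])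
  also have "Dg = (\<lambda>v. (v, v)) ` UNIV" by (auto simp: Dg_def)
  also have "det_on ((\<lambda>v. (v, v)) ` UNIV) (\<lambda>d d'. V$(fst d)$(fst d')) = det_on UNIV (\<lambda>v w. V$v$w)"
    by (subst det_on_reindex) (auto intro: inj_onI)
  also have "\<dots> = det V" unfolding det_on_UNIV by simp
  finally show ?thesis .
qed
end

theorem proposition1:
  fixes E :: "'v::finite \<Rightarrow> 'v \<Rightarrow> bool" and q :: nat and a b u :: real
  assumes sym: "\<And>x y. E x y \<Longrightarrow> E y x"
    and irrefl: "\<And>x. \<not> E x x"
    and connected: "\<And>x y. E\<^sup>*\<^sup>* x y"
    and regular: "\<And>v. deg E v = q + 1"
    and a: "0 \<le> a" "a \<le> 1"
    and u: "1 - b^2 * u^2 \<noteq> 0"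
  shows "let n = CARD('v); m = num_edges E;
             \<eta> = (1 - real q) * a + b * (real q + 1);
             \<sigma> = b * ((1 - real q) * a + b * real q)
         in zeta_inv a b E u
              = (1 - b^2 * u^2) powi (int m - int n)
                * det ((1 + \<sigma> * u^2) *\<^sub>R mat 1 - (\<eta> * u) *\<^sub>R trans_mat E)
          \<and> (1 - b^2 * u^2) powi (int m - int n)
                * det ((1 + \<sigma> * u^2) *\<^sub>R mat 1 - (\<eta> * u) *\<^sub>R trans_mat E)
              = (1 - b^2 * u^2) powi (int m - int n)
                * det ((1 - \<eta> * u + \<sigma> * u^2) *\<^sub>R (mat 1 :: real^'v^'v)
                       + (\<eta> * u / (real q + 1)) *\<^sub>R laplacian E)"
proof -
  define n where "n = CARD('v)"
  define m where "m = num_edges E"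
  define \<eta> where "\<eta> = (1 - real q) * a + b * (real q + 1)"
  define \<sigma> where "\<sigma> = b * ((1 - real q) * a + b * real q)"
  define s where "s = u * b"
  define r where "r = 1 - s^2"
  have r_eq: "r = 1 - b^2 * u^2" by (simp add: r_def s_def power_mult_distrib)
  have r0: "r \<noteq> 0" using u r_eq by simp
  define \<alpha> where "\<alpha> = (2 / (real q + 1) - 1) * a + b"
  define \<beta> where "\<beta> = u * \<alpha>"
  define W where "W = (mat 1 :: real^('v\<times>'v)^('v\<times>'v)) - s *\<^sub>R Jm E"
  define X where "X = (\<beta> / r) *\<^sub>R Tm E"
  define Y where "Y = Ttm E ** W"
  define V where "V = ((\<chi> v w. (if v = w then 1 else 0) - (\<beta> / r) * ((if E v w then 1 else 0) - s * (real q + 1) * (if v = w then 1 else 0))) :: real^'v^'v)"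
  define T1 where "T1 = (1 + \<sigma> * u^2) *\<^sub>R mat 1 - (\<eta> * u) *\<^sub>R trans_mat E"
  have alg: "(mat 1 + s *\<^sub>R Jm E - \<beta> *\<^sub>R Bm E) ** W = (mat 1 - s^2 *\<^sub>R Pm E) ** (mat 1 - X ** Y)"
    "X ** X = 0" "Y ** Y = 0" "Y ** X = (\<beta> / r) *\<^sub>R (Av E - s *\<^sub>R (Ttm E ** TTm E))"
    using main_alg(1)[where E=E, OF sym irrefl, where s=s and cc=\<beta>] main_alg(2)[where E=E, OF sym irrefl, where s=s and cc=\<beta>] main_alg(3)[where E=E, OF sym irrefl, where s=s] main_alg(4)[where E=E, OF sym irrefl, where s=s and cc=\<beta>] r0 unfolding r_def W_def X_def Y_def by auto
  have M: "(mat 1 :: real^('v\<times>'v)^('v\<times>'v)) - u *\<^sub>R Gm E a b = mat 1 + s *\<^sub>R Jm E - \<beta> *\<^sub>R Bm E"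
  proof -
    have G: "Gm E a b = \<alpha> *\<^sub>R Bm E - b *\<^sub>R Jm E"
      unfolding \<alpha>_def by (rule G_eq[where E=E, OF sym irrefl regular])
    show ?thesis by (simp add: G \<beta>_def s_def algebra_simps)
  qed
  have zM: "zeta_inv a b E u = det (mat 1 + s *\<^sub>R Jm E - \<beta> *\<^sub>R Bm E)"
  proof -
    have "zeta_inv a b E u = det ((mat 1 :: real^('v\<times>'v)^('v\<times>'v)) - u *\<^sub>R Gm E a b)"
      by (rule zeta_det[where E=E, OF sym irrefl])
    then show ?thesis by (simp only: M)
  qed
  have "det (mat 1 + s *\<^sub>R Jm E - \<beta> *\<^sub>R Bm E) * det W
      = det ((mat 1 :: real^('v\<times>'v)^('v\<times>'v)) - s^2 *\<^sub>R Pm E) * det (mat 1 - X ** Y)"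
    unfolding det_mul[symmetric] alg(1) ..
  also have "det (mat 1 - X ** Y) = det (mat 1 - Y ** X)"
    by (rule sylvester_nil[OF alg(2) alg(3)])
  also have "\<dots> = det V"
    unfolding alg(4) V_def by (rule YX_block[where E=E, OF sym irrefl regular])
  also have "det ((mat 1 :: real^('v\<times>'v)^('v\<times>'v)) - s^2 *\<^sub>R Pm E) = r ^ (2 * m)"
    using det_Dr[where E=E, OF sym irrefl, of s] card_arcs_even[where E=E, OF sym irrefl]
    by (simp add: r_def m_def)
  finally have e0: "det (mat 1 + s *\<^sub>R Jm E - \<beta> *\<^sub>R Bm E) * det W = r ^ (2 * m) * det V" .
  have dW: "det W = r ^ m"
    using det_W[where E=E, OF sym irrefl, of s] by (simp add: W_def r_def m_def)
  have e1: "det (mat 1 + s *\<^sub>R Jm E - \<beta> *\<^sub>R Bm E) * r ^ m = r ^ (2 * m) * det V"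
    using e0 dW by simp
  have e2: "det (mat 1 + s *\<^sub>R Jm E - \<beta> *\<^sub>R Bm E) = r ^ m * det V"
  proof -
    have "r ^ (2 * m) = r ^ m * r ^ m" by (simp add: power_add[symmetric] mult_2)
    with e1 r0 show ?thesis by (simp add: mult.commute mult.left_commute)
  qed
  have qpos: "real q + 1 \<noteq> 0" by simp
  have T1V: "T1 = r *\<^sub>R V"
  proof -
    have key1: "r + \<beta> * s * (real q + 1) = 1 + \<sigma> * u^2"
      unfolding r_def \<beta>_def s_def \<alpha>_def \<sigma>_def using qpos
      by (simp add: field_simps power2_eq_square)
    have key2: "\<eta> * u / (real q + 1) = \<beta>"
      unfolding \<eta>_def \<beta>_def \<alpha>_def using qpos by (simp add: field_simps)
    have "T1$i$j = (r *\<^sub>R V)$i$j" for i j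
    proof (cases "i = j")
      case True
      have "T1$i$j = 1 + \<sigma> * u^2" using True irrefl[of i] by (simp add: T1_def trans_mat_def mat_def)
      also have "\<dots> = r * (1 - \<beta> / r * (0 - s * (real q + 1) * 1))"
        using r0 key1 by (simp add: field_simps)
      also have "\<dots> = (r *\<^sub>R V)$i$j" using True irrefl[of i] by (simp add: V_def)
      finally show ?thesis .
    next
      case False
      have "T1$i$j = - (\<eta> * u / (real q + 1)) * (if E i j then 1 else 0)"
        using False by (simp add: T1_def trans_mat_def mat_def regular)
      also have "\<dots> = r * (0 - \<beta> / r * ((if E i j then 1 else 0) - 0))"
        using r0 key2 by simp
      also have "\<dots> = (r *\<^sub>R V)$i$j" using False by (simp add: V_def)
      finally show ?thesis .
    qed
    then show ?thesis by (simp add: vec_eq_iff)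
  qed
  have dT1: "det T1 = r ^ n * det V"
    unfolding T1V det_scaleR n_def ..
  have part1: "zeta_inv a b E u = r powi (int m - int n) * det T1"
    using r0 by (simp add: zM e2 dT1 power_int_diff)
  have T2: "T1 = (1 - \<eta> * u + \<sigma> * u^2) *\<^sub>R (mat 1 :: real^'v^'v) + (\<eta> * u / (real q + 1)) *\<^sub>R laplacian E"
  proof -
    have "T1$i$j = ((1 - \<eta> * u + \<sigma> * u^2) *\<^sub>R (mat 1 :: real^'v^'v) + (\<eta> * u / (real q + 1)) *\<^sub>R laplacian E)$i$j" for i j
    proof (cases "i = j")
      case True
      then show ?thesis using irrefl[of i] qpos
        apply (simp add: T1_def trans_mat_def mat_def laplacian_def deg_mat_def adj_mat_def regular algebra_simps)
        apply (simp add: field_simps)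
        done
    next
      case False
      then show ?thesis
        by (simp add: T1_def trans_mat_def mat_def laplacian_def deg_mat_def adj_mat_def regular)
    qed
    then show ?thesis by (simp add: vec_eq_iff)
  qed
  have part2: "r powi (int m - int n) * det T1 = r powi (int m - int n) *
      det ((1 - \<eta> * u + \<sigma> * u^2) *\<^sub>R (mat 1 :: real^'v^'v) + (\<eta> * u / (real q + 1)) *\<^sub>R laplacian E)"
    by (simp only: T2)
  show ?thesis
    using part1 part2 unfolding Let_def n_def m_def \<eta>_def \<sigma>_def r_eq T1_def
    apply (intro conjI) apply assumption apply assumption done
qed

end
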